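(* Let $\Gamma=(\gamma_n)_{n\ge1}$ be distinct complex numbers with $\inf_n|\gamma_{n+1}|/|\gamma_n|>1$, and $v=(v_n)$ positive with $\sum_nv_n/(1+|\gamma_n|^2)<\infty$. Suppose that either $v_n=o(V_n)$ or $v_n/|\gamma_n|^2=o(P_n)$ as $n\to\infty$. If $\mu$ is a nonnegative measure on $\mathbb{C}$ with $\mu(\Gamma)=0$ such that $H_{(\Gamma,v)}$ is both bounded and bounded below from $\ell^2_v$ to $L^2(\mathbb{C},\mu)$, then there exist positive numbers $M$ and $\delta$ such that \[ \int_{D_n(v;M)}\frac{v_n\,d\mu(z)}{|z-\gamma_n|^2}\ge\delta \] for all but finitely many indices $n$.
   Context: $\ell^2_v=\{(a_n):\sum|a_n|^2v_n<\infty\}$; $H_{(\Gamma,v)}a(z)=\sum_na_nv_n/(z-\gamma_n)$ for $z\in\mathbb{C}\setminus\Gamma$. Bounded below means $\|H_{(\Gamma,v)}a\|_{L^2(\mu)}\ge c\|a\|_v$ for some $c>0$. $V_1=1$, $V_n=\sum_{j<n}v_j$; $P_n=\sum_{j>n}v_j/|\gamma_j|^2$. $\Omega_1=\{|z|<(|\gamma_1|+|\gamma_2|)/2\}$, $\Omega_n=\{(|\gamma_{n-1}|+|\gamma_n|)/2\le|z|<(|\gamma_n|+|\gamma_{n+1}|)/2\}$ ($n\ge2$). $D_n(v;M)=\{\lambda\in\Omega_n: Mv_n/|\lambda-\gamma_n|^2\ge\max(V_n/|\lambda|^2,P_n)\}$. *)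

theory Defs
  imports "HOL-Analysis.Analysis" "HOL-Probability.Probability" "HOL-Library.Landau_Symbols"
begin

text \<open>Indexing convention: the paper's index n = 1,2,3,... corresponds to index n-1 here,
  i.e. all sequences are indexed from 0.\<close>

definition l2v :: "(nat \<Rightarrow> real) \<Rightarrow> (nat \<Rightarrow> complex) set" where
  "l2v v = {a. summable (\<lambda>n. (cmod (a n))\<^sup>2 * v n)}"

definition normv2 :: "(nat \<Rightarrow> real) \<Rightarrow> (nat \<Rightarrow> complex) \<Rightarrow> real" where
  "normv2 v a = (\<Sum>n. (cmod (a n))\<^sup>2 * v n)"

definition Hop :: "(nat \<Rightarrow> complex) \<Rightarrow> (nat \<Rightarrow> real) \<Rightarrow> (nat \<Rightarrow> complex) \<Rightarrow> complex \<Rightarrow> complex" where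
  "Hop \<gamma> v a z = (\<Sum>n. a n * complex_of_real (v n) / (z - \<gamma> n))"

text \<open>V: paper's V_1 = 1, V_n = sum_{j<n} v_j; here V 0 = 1, V n = sum_{j<n} v j.\<close>
definition Vs :: "(nat \<Rightarrow> real) \<Rightarrow> nat \<Rightarrow> real" where
  "Vs v n = (if n = 0 then 1 else (\<Sum>j<n. v j))"

definition Ps :: "(nat \<Rightarrow> complex) \<Rightarrow> (nat \<Rightarrow> real) \<Rightarrow> nat \<Rightarrow> real" where
  "Ps \<gamma> v n = (\<Sum>j. v (j + Suc n) / (cmod (\<gamma> (j + Suc n)))\<^sup>2)"

definition Omega :: "(nat \<Rightarrow> complex) \<Rightarrow> nat \<Rightarrow> complex set" where
  "Omega \<gamma> n = (if n = 0 then {z. cmod z < (cmod (\<gamma> 0) + cmod (\<gamma> 1)) / 2}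
     else {z. (cmod (\<gamma> (n - 1)) + cmod (\<gamma> n)) / 2 \<le> cmod z \<and>
              cmod z < (cmod (\<gamma> n) + cmod (\<gamma> (Suc n))) / 2})"

text \<open>Values with division by zero are treated as +infinity, as in the paper:
  at lambda = gamma_n the left side is infinite (so gamma_n belongs to D_n),
  at lambda = 0 the term V_n/|lambda|^2 is infinite (so 0 does not belong to D_n).\<close>
definition Dset :: "(nat \<Rightarrow> complex) \<Rightarrow> (nat \<Rightarrow> real) \<Rightarrow> real \<Rightarrow> nat \<Rightarrow> complex set" where
  "Dset \<gamma> v M n = {z \<in> Omega \<gamma> n. z \<noteq> 0 \<and>
     (z = \<gamma> n \<or> M * v n / (cmod (z - \<gamma> n))\<^sup>2 \<ge> max (Vs v n / (cmod z)\<^sup>2) (Ps \<gamma> v n))}"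

end

theory Submission
  imports Defs
begin
lemma re_half:
  fixes x y :: complex
  assumes "cmod y < cmod x"
  shows "Re (x / (x - y)) \<ge> 1/2"
proof -
  define a where "a = Re x" define b where "b = Im x"
  define c where "c = Re y" define d where "d = Im y"
  have lt: "c\<^sup>2 + d\<^sup>2 < a\<^sup>2 + b\<^sup>2"
  proof -
    have "(cmod y)\<^sup>2 < (cmod x)\<^sup>2" using assms by (intro power_strict_mono) auto
    thus ?thesis unfolding a_def b_def c_def d_def by (simp add: cmod_power2)
  qed
  have ne: "(a - c)\<^sup>2 + (b - d)\<^sup>2 > 0"
  proof -
    have "x \<noteq> y" using assms by auto
    hence "a \<noteq> c \<or> b \<noteq> d" unfolding a_def b_def c_def d_def using complex_eqI by blast
    thus ?thesis by (auto simp: sum_power2_gt_zero_iff)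
  qed
  have e: "Re (x / (x - y)) = (a * (a - c) + b * (b - d)) / ((a - c)\<^sup>2 + (b - d)\<^sup>2)"
    unfolding a_def b_def c_def d_def by (simp add: Re_divide)
  have "(a - c)\<^sup>2 + (b - d)\<^sup>2 \<le> 2 * (a * (a - c) + b * (b - d))"
    using lt by (simp add: power2_eq_square algebra_simps)
  thus ?thesis using ne unfolding e by (simp add: le_divide_eq)
qed


lemma ennreal_div_helper:
  fixes X :: ennreal
  assumes a: "a > 0" and le: "ennreal a * X \<le> ennreal b"
  shows "X \<le> ennreal (b / a)"
proof (cases X)
  case (real x)
  hence "ennreal (a * x) \<le> ennreal b" using le a by (simp add: ennreal_mult)
  show ?thesis
  proof (cases "b \<ge> 0")
    case True
    hence "a * x \<le> b" using \<open>ennreal (a * x) \<le> ennreal b\<close> by (simp add: ennreal_le_iff)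
    hence "x \<le> b / a" using a by (simp add: field_simps mult.commute)
    thus ?thesis using real by (simp add: ennreal_leI)
  next
    case False
    hence "ennreal (a * x) = 0" using \<open>ennreal (a * x) \<le> ennreal b\<close> by (simp add: ennreal_neg)
    hence "a * x \<le> 0" by (simp add: ennreal_eq_0_iff)
    hence "x = 0" using a real by (simp add: mult_le_0_iff)
    thus ?thesis using real by simp
  qed
next
  case top
  thus ?thesis using le a by (simp add: ennreal_mult_top top_unique)
qed

locale L =
  fixes \<gamma> :: "nat \<Rightarrow> complex" and v :: "nat \<Rightarrow> real" and \<mu> :: "complex measure"
    and q C c :: real
  assumes q: "q > 1" and gq: "\<And>n. cmod (\<gamma> (Suc n)) \<ge> q * cmod (\<gamma> n)"
    and nz: "\<And>n. \<gamma> n \<noteq> 0" and vpos: "\<And>n. v n > 0"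
    and vsum: "summable (\<lambda>n. v n / (cmod (\<gamma> n))\<^sup>2)"
    and borel: "sets \<mu> = sets borel"
    and C: "C \<ge> 0"
    and bdd: "\<And>a. a \<in> l2v v \<Longrightarrow>
       (\<integral>\<^sup>+ z. ennreal ((cmod (Hop \<gamma> v a z))\<^sup>2) \<partial>\<mu>) \<le> ennreal (C * normv2 v a)"
    and c: "c > 0"
    and bdd_below: "\<And>a. a \<in> l2v v \<Longrightarrow>
       (\<integral>\<^sup>+ z. ennreal ((cmod (Hop \<gamma> v a z))\<^sup>2) \<partial>\<mu>) \<ge> ennreal (c\<^sup>2 * normv2 v a)"
begin

definition g where "g n = cmod (\<gamma> n)"
definition \<rho> where "\<rho> n = (g n + g (Suc n)) / 2"
abbreviation V where "V \<equiv> Vs v"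
abbreviation P where "P \<equiv> Ps \<gamma> v"

lemma g_pos: "g n > 0" using nz by (simp add: g_def)
lemma g_Suc: "g (Suc n) \<ge> q * g n" using gq by (simp add: g_def)
lemma g_less_Suc: "g n < g (Suc n)"
proof -
  have "g n < q * g n" using q g_pos[of n] by simp
  thus ?thesis using g_Suc[of n] by linarith
qed
lemma g_strict: "strict_mono g"
  using g_less_Suc by (simp add: strict_mono_Suc_iff)
lemma g_less: "m < n \<Longrightarrow> g m < g n" using g_strict by (simp add: strict_mono_less)
lemma g_le: "m \<le> n \<Longrightarrow> g m \<le> g n" using g_strict by (simp add: strict_mono_less_eq)
lemma g_pow: "g (n + k) \<ge> q ^ k * g n"
proof (induction k)
  case 0 thus ?case by simp
next
  case (Suc k)
  have "q ^ Suc k * g n = q * (q ^ k * g n)" by simp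
  also have "\<dots> \<le> q * g (n + k)" using Suc q by simp
  also have "\<dots> \<le> g (n + Suc k)" using g_Suc[of "n+k"] by simp
  finally show ?case .
qed
lemma rho_gt: "g n < \<rho> n" using g_less_Suc[of n] by (simp add: \<rho>_def)
lemma rho_lt: "\<rho> n < g (Suc n)" using g_less_Suc[of n] by (simp add: \<rho>_def)
lemma rho_pos: "\<rho> n > 0" using rho_gt[of n] g_pos[of n] by linarith
lemma rho_less: "m < n \<Longrightarrow> \<rho> m < \<rho> n"
  using rho_lt[of m] rho_gt[of n] g_le[of "Suc m" n] by linarith
lemma rho_le: "m \<le> n \<Longrightarrow> \<rho> m \<le> \<rho> n"
  using rho_less[of m n] by (cases "m = n") auto
lemma rho_unbounded: "\<exists>k. x < \<rho> (n + k)"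
proof -
  obtain k where k: "x / g 0 < q ^ k" using real_arch_pow[OF q] by blast
  have "x < q ^ k * g 0" using k g_pos[of 0] by (simp add: divide_less_eq)
  also have "\<dots> \<le> g (0 + k)" by (rule g_pow)
  also have "\<dots> \<le> g (n + k)" by (rule g_le) simp
  also have "\<dots> < \<rho> (n + k)" by (rule rho_gt)
  finally show ?thesis by blast
qed

lemma Omega_eq: "n \<ge> 1 \<Longrightarrow> Omega \<gamma> n = {z. \<rho> (n - 1) \<le> cmod z \<and> cmod z < \<rho> n}"
  by (simp add: Omega_def \<rho>_def g_def)

lemma space_mu: "space \<mu> = UNIV"
  using sets_eq_imp_space_eq[OF borel] by simp
lemma meas_mu: "borel_measurable \<mu> = borel_measurable borel"
  by (rule measurable_cong_sets[OF borel refl])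
lemma sets_mu: "sets \<mu> = sets borel" by (rule borel)

end

context L begin

lemma g_ne[simp]: "g n \<noteq> 0" using g_pos[of n] by simp

lemma summable_vg: "summable (\<lambda>j. v j / (g j)\<^sup>2)"
  using vsum by (simp add: g_def)

lemma P_eq: "P n = (\<Sum>j. v (j + Suc n) / (g (j + Suc n))\<^sup>2)"
  by (simp add: Ps_def g_def)

lemma summable_shift: "summable (\<lambda>j. v (j + k) / (g (j + k))\<^sup>2)"
  using summable_vg by (subst summable_iff_shift) 

definition t where "t n j = (if n < j then v j / (g j)\<^sup>2 else 0)"

lemma t_sums: "t n sums P n"
proof -
  have "(\<lambda>j. t n (j + Suc n)) sums P n"
    unfolding P_eq t_def using summable_shift[of "Suc n"] by (simp add: summable_sums)
  hence "t n sums (P n + (\<Sum>i<Suc n. t n i))" using sums_iff_shift[of "t n" "Suc n" "P n"] by blast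
  moreover have "(\<Sum>i<Suc n. t n i) = 0" by (simp add: t_def)
  ultimately show ?thesis by simp
qed

lemma P_pos: "P n > 0"
proof -
  have "0 < (\<Sum>j. v (j + Suc n) / (g (j + Suc n))\<^sup>2)"
    using summable_shift[of "Suc n"] vpos g_pos
    by (intro suminf_pos) (auto intro!: divide_pos_pos simp: g_ne)
  thus ?thesis by (simp add: P_eq)
qed

lemma P_Suc: "P n = v (Suc n) / (g (Suc n))\<^sup>2 + P (Suc n)"
proof -
  let ?h = "\<lambda>j. v (j + Suc n) / (g (j + Suc n))\<^sup>2"
  have "(\<Sum>j. ?h (Suc j)) = suminf ?h - ?h 0"
    using summable_shift[of "Suc n"] by (rule suminf_split_head)
  moreover have "(\<lambda>j. ?h (Suc j)) = (\<lambda>j. v (j + Suc (Suc n)) / (g (j + Suc (Suc n)))\<^sup>2)"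
    by simp
  ultimately show ?thesis by (simp add: P_eq)
qed

lemma P_mono: "P (Suc n) \<le> P n"
  using P_Suc[of n] vpos[of "Suc n"] g_pos[of "Suc n"] by (simp add: divide_nonneg_pos)

lemma V_pos: "V n > 0"
proof (cases "n = 0")
  case False
  hence "{..<n} \<noteq> {}" by auto
  hence "0 < (\<Sum>j<n. v j)" using vpos by (intro sum_pos) auto
  thus ?thesis using False by (simp add: Vs_def)
qed (simp add: Vs_def)

lemma V_Suc: "n \<ge> 1 \<Longrightarrow> V (Suc n) = V n + v n"
  by (simp add: Vs_def)

lemma V_mono: "n \<ge> 1 \<Longrightarrow> V n \<le> V (Suc n)"
  using V_Suc[of n] vpos[of n] by simp

end

context L begin

lemma E_bound: "ennreal (c\<^sup>2) \<le> (\<integral>\<^sup>+ z. ennreal (v n / (cmod (z - \<gamma> n))\<^sup>2) \<partial>\<mu>)"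
proof -
  define \<kappa> where "\<kappa> = 1 / sqrt (v n)"
  have k2: "\<kappa>\<^sup>2 * v n = 1" using vpos[of n] by (simp add: \<kappa>_def power_divide)
  define a where "a = (\<lambda>j. if j = n then complex_of_real \<kappa> else 0)"
  have s1: "(\<lambda>j. (cmod (a j))\<^sup>2 * v j) = (\<lambda>j. if j = n then (\<kappa>\<^sup>2 * v n) else 0)"
    by (auto simp: a_def)
  have sums1: "(\<lambda>j. (cmod (a j))\<^sup>2 * v j) sums 1"
    unfolding s1 using sums_single[of n "\<lambda>_. \<kappa>\<^sup>2 * v n"] k2 by simp
  have l2: "a \<in> l2v v" using sums1 by (auto simp: l2v_def sums_summable)
  have nv: "normv2 v a = 1" using sums1 by (simp add: normv2_def sums_iff)
  have H: "Hop \<gamma> v a z = complex_of_real \<kappa> * complex_of_real (v n) / (z - \<gamma> n)" for z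
  proof -
    have "(\<lambda>j. a j * complex_of_real (v j) / (z - \<gamma> j)) =
          (\<lambda>j. if j = n then complex_of_real \<kappa> * complex_of_real (v n) / (z - \<gamma> n) else 0)"
      by (auto simp: a_def)
    thus ?thesis unfolding Hop_def
      using sums_single[of n "\<lambda>_. complex_of_real \<kappa> * complex_of_real (v n) / (z - \<gamma> n)"]
      by (simp add: sums_iff)
  qed
  have N: "(cmod (Hop \<gamma> v a z))\<^sup>2 = v n / (cmod (z - \<gamma> n))\<^sup>2" for z
  proof -
    have "(cmod (Hop \<gamma> v a z))\<^sup>2 = \<kappa>\<^sup>2 * (v n)\<^sup>2 / (cmod (z - \<gamma> n))\<^sup>2"
      unfolding H using vpos[of n] by (simp add: norm_mult norm_divide power_divide power_mult_distrib)
    also have "\<kappa>\<^sup>2 * (v n)\<^sup>2 = v n" using k2 by (simp add: power2_eq_square algebra_simps)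
    finally show ?thesis .
  qed
  have "ennreal (c\<^sup>2 * normv2 v a) \<le> (\<integral>\<^sup>+ z. ennreal ((cmod (Hop \<gamma> v a z))\<^sup>2) \<partial>\<mu>)"
    by (rule bdd_below[OF l2])
  thus ?thesis by (simp add: nv N)
qed

end

context L begin

lemma sumV_lower:
  assumes n: "n \<ge> 1" and z: "\<rho> (n - 1) \<le> cmod z"
  shows "V n / (2 * cmod z) \<le> cmod (\<Sum>j<n. complex_of_real (v j) / (z - \<gamma> j))"
proof -
  let ?S = "\<Sum>j<n. complex_of_real (v j) / (z - \<gamma> j)"
  have zp: "cmod z > 0" using z rho_pos[of "n-1"] by linarith
  have lt: "cmod (\<gamma> j) < cmod z" if "j < n" for j
  proof -
    have "g j \<le> g (n - 1)" using that by (intro g_le) simp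
    thus ?thesis using rho_gt[of "n-1"] z by (simp add: g_def)
  qed
  define W where "W j = z / (z - \<gamma> j)" for j
  have "z * ?S = (\<Sum>j<n. complex_of_real (v j) * W j)"
    by (simp add: W_def sum_distrib_left algebra_simps)
  hence "Re (z * ?S) = (\<Sum>j<n. v j * Re (W j))"
    by simp
  also have "\<dots> \<ge> (\<Sum>j<n. v j * (1/2))"
    using re_half[OF lt] vpos by (intro sum_mono mult_left_mono) (auto simp: less_imp_le W_def)
  finally have h: "(\<Sum>j<n. v j * (1/2)) \<le> Re (z * ?S)" .
  have eqV: "V n / 2 = (\<Sum>j<n. v j * (1/2))" using n by (simp add: Vs_def sum_divide_distrib)
  have "V n / 2 \<le> Re (z * ?S)" using h eqV by linarith
  also have "\<dots> \<le> cmod (z * ?S)" by (rule complex_Re_le_cmod)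
  also have "\<dots> = cmod z * cmod ?S" by (simp add: norm_mult)
  finally show ?thesis using zp by (simp add: divide_le_eq mult.commute)
qed

lemma A_bound:
  assumes n: "n \<ge> 1"
  shows "(\<integral>\<^sup>+ z. ennreal (V n / (cmod z)\<^sup>2) * indicator {z. \<rho> (n - 1) \<le> cmod z} z \<partial>\<mu>)
           \<le> ennreal (4 * C)"
proof -
  define \<kappa> where "\<kappa> = 2 / sqrt (V n)"
  have Vp: "V n > 0" by (rule V_pos)
  have k2: "\<kappa>\<^sup>2 = 4 / V n" using Vp by (simp add: \<kappa>_def power_divide)
  define a where "a = (\<lambda>j. if j < n then complex_of_real \<kappa> else 0)"
  have "(\<lambda>j. (cmod (a j))\<^sup>2 * v j) sums (\<Sum>j\<in>{..<n}. (cmod (a j))\<^sup>2 * v j)"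
    by (rule sums_finite) (auto simp: a_def)
  moreover have "(\<Sum>j\<in>{..<n}. (cmod (a j))\<^sup>2 * v j) = \<kappa>\<^sup>2 * V n"
    using n by (simp add: a_def Vs_def sum_distrib_left)
  ultimately have sums1: "(\<lambda>j. (cmod (a j))\<^sup>2 * v j) sums 4" using k2 Vp by simp
  have l2: "a \<in> l2v v" using sums1 by (auto simp: l2v_def sums_summable)
  have nv: "normv2 v a = 4" using sums1 by (simp add: normv2_def sums_iff)
  have H: "Hop \<gamma> v a z = complex_of_real \<kappa> * (\<Sum>j<n. complex_of_real (v j) / (z - \<gamma> j))" for z
  proof -
    have "(\<lambda>j. a j * complex_of_real (v j) / (z - \<gamma> j)) sums
          (\<Sum>j\<in>{..<n}. a j * complex_of_real (v j) / (z - \<gamma> j))"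
      by (rule sums_finite) (auto simp: a_def)
    moreover have "(\<Sum>j\<in>{..<n}. a j * complex_of_real (v j) / (z - \<gamma> j)) =
       complex_of_real \<kappa> * (\<Sum>j<n. complex_of_real (v j) / (z - \<gamma> j))"
      by (simp add: a_def sum_distrib_left)
    ultimately show ?thesis by (simp add: Hop_def sums_iff)
  qed
  have pw: "ennreal (V n / (cmod z)\<^sup>2) * indicator {z. \<rho> (n - 1) \<le> cmod z} z
            \<le> ennreal ((cmod (Hop \<gamma> v a z))\<^sup>2)" for z
  proof (cases "\<rho> (n - 1) \<le> cmod z")
    case True
    have zp: "cmod z > 0" using True rho_pos[of "n-1"] by linarith
    let ?S = "\<Sum>j<n. complex_of_real (v j) / (z - \<gamma> j)"
    have lo: "V n / (2 * cmod z) \<le> cmod ?S" by (rule sumV_lower[OF n True])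
    have "(V n / (2 * cmod z))\<^sup>2 \<le> (cmod ?S)\<^sup>2"
      using lo Vp zp by (intro power_mono) auto
    hence "\<kappa>\<^sup>2 * (V n / (2 * cmod z))\<^sup>2 \<le> \<kappa>\<^sup>2 * (cmod ?S)\<^sup>2"
      by (intro mult_left_mono) auto
    moreover have "\<kappa>\<^sup>2 * (V n / (2 * cmod z))\<^sup>2 = V n / (cmod z)\<^sup>2"
      using Vp zp unfolding k2 by (simp add: power2_eq_square field_simps)
    moreover have "(cmod (Hop \<gamma> v a z))\<^sup>2 = \<kappa>\<^sup>2 * (cmod ?S)\<^sup>2"
      unfolding H by (simp add: norm_mult power_mult_distrib)
    ultimately show ?thesis using True by (simp add: ennreal_leI)
  qed simp
  have "(\<integral>\<^sup>+ z. ennreal (V n / (cmod z)\<^sup>2) * indicator {z. \<rho> (n - 1) \<le> cmod z} z \<partial>\<mu>)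
        \<le> (\<integral>\<^sup>+ z. ennreal ((cmod (Hop \<gamma> v a z))\<^sup>2) \<partial>\<mu>)"
    by (rule nn_integral_mono) (rule pw)
  also have "\<dots> \<le> ennreal (C * normv2 v a)" by (rule bdd[OF l2])
  finally show ?thesis by (simp add: nv mult.commute)
qed

end

context L begin

lemma sumP:
  assumes z: "cmod z < \<rho> n"
  defines "s \<equiv> (\<lambda>j. if n < j then complex_of_real (v j) / (cnj (\<gamma> j) * (z - \<gamma> j)) else 0)"
  shows "summable s" and "P n / 2 \<le> cmod (suminf s)"
proof -
  define \<sigma> where "\<sigma> = cmod z / g (Suc n)"
  have gS: "g (Suc n) > 0" by (rule g_pos)
  have \<sigma>1: "\<sigma> < 1" using z rho_lt[of n] gS by (simp add: \<sigma>_def divide_less_eq)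
  have \<sigma>0: "\<sigma> \<ge> 0" using gS by (simp add: \<sigma>_def)
  have zle: "cmod z \<le> \<sigma> * g j" if "n < j" for j
  proof -
    have "cmod z = \<sigma> * g (Suc n)" using gS by (simp add: \<sigma>_def)
    also have "\<dots> \<le> \<sigma> * g j" using that \<sigma>0 by (intro mult_left_mono g_le) auto
    finally show ?thesis .
  qed
  have zlt: "cmod z < cmod (\<gamma> j)" if "n < j" for j
  proof -
    have "g (Suc n) \<le> g j" using that by (intro g_le) auto
    thus ?thesis using z rho_lt[of n] by (simp add: g_def)
  qed
  have nb: "norm (s j) \<le> t n j / (1 - \<sigma>)" for j
  proof (cases "n < j")
    case True
    have gj: "g j > 0" by (rule g_pos)
    have d: "cmod (z - \<gamma> j) \<ge> (1 - \<sigma>) * g j"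
    proof -
      have "cmod (\<gamma> j) - cmod z \<le> cmod (z - \<gamma> j)" by (metis norm_minus_commute norm_triangle_ineq2)
      thus ?thesis using zle[OF True] by (simp add: g_def algebra_simps)
    qed
    have pos: "(1 - \<sigma>) * g j > 0" using \<sigma>1 gj by simp
    have "norm (s j) = v j / (g j * cmod (z - \<gamma> j))"
      using True vpos[of j] by (simp add: s_def norm_divide norm_mult g_def)
    also have "\<dots> \<le> v j / (g j * ((1 - \<sigma>) * g j))"
    proof -
      have cp: "cmod (z - \<gamma> j) > 0" using d pos by linarith
      show ?thesis
        by (rule divide_left_mono[OF mult_left_mono[OF d]]) (use pos gj vpos[of j] cp in auto)
    qed
    also have "\<dots> = t n j / (1 - \<sigma>)" using True \<sigma>1 by (simp add: t_def power2_eq_square)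
    finally show ?thesis .
  qed (simp add: s_def t_def)
  have st: "summable (t n)" using t_sums by (rule sums_summable)
  show sm: "summable s"
    by (rule summable_comparison_test'[where N=0, OF summable_divide[OF st]]) (use nb in auto)
  have re: "t n j / 2 \<le> - Re (s j)" for j
  proof (cases "n < j")
    case True
    have ne1: "z - \<gamma> j \<noteq> 0" "\<gamma> j - z \<noteq> 0" using zlt[OF True] by auto
    have cn: "cnj (\<gamma> j) = complex_of_real ((g j)\<^sup>2) / \<gamma> j"
      using complex_norm_square[of "\<gamma> j"] nz[of j] by (simp add: g_def field_simps)
    define w where "w = \<gamma> j / (\<gamma> j - z)"
    have "s j = - complex_of_real (v j / (g j)\<^sup>2) * w"
      using True ne1 nz[of j] by (simp add: s_def cn w_def field_simps)
    hence "- Re (s j) = (v j / (g j)\<^sup>2) * Re w" by simp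
    hence "- Re (s j) = (v j / (g j)\<^sup>2) * Re (\<gamma> j / (\<gamma> j - z))" by (simp add: w_def)
    also have "\<dots> \<ge> (v j / (g j)\<^sup>2) * (1/2)"
      using re_half[OF zlt[OF True]] vpos[of j] by (intro mult_left_mono) auto
    finally show ?thesis using True by (simp add: t_def)
  qed (simp add: s_def t_def)
  have "P n / 2 = (\<Sum>j. t n j / 2)" using t_sums by (simp add: sums_iff suminf_divide)
  also have "\<dots> \<le> (\<Sum>j. - Re (s j))"
    using re summable_divide[OF st] summable_minus[OF summable_Re[OF sm]] by (rule suminf_le)
  also have "\<dots> = - Re (suminf s)"
    using Re_suminf[OF sm] summable_Re[OF sm] by (simp add: suminf_minus)
  also have "\<dots> \<le> cmod (suminf s)" using abs_Re_le_cmod[of "suminf s"] by linarith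
  finally show "P n / 2 \<le> cmod (suminf s)" .
qed

end

context L begin

lemma B_bound:
  "(\<integral>\<^sup>+ z. ennreal (P n) * indicator {z. cmod z < \<rho> n} z \<partial>\<mu>) \<le> ennreal (4 * C)"
proof -
  define \<kappa> where "\<kappa> = 2 / sqrt (P n)"
  have Pp: "P n > 0" by (rule P_pos)
  have k2: "\<kappa>\<^sup>2 = 4 / P n" using Pp by (simp add: \<kappa>_def power_divide)
  define a where "a = (\<lambda>j. if n < j then complex_of_real \<kappa> / cnj (\<gamma> j) else 0)"
  have eq: "(\<lambda>j. (cmod (a j))\<^sup>2 * v j) = (\<lambda>j. \<kappa>\<^sup>2 * t n j)"
    by (auto simp: a_def t_def norm_divide power_divide g_def)
  have sums1: "(\<lambda>j. (cmod (a j))\<^sup>2 * v j) sums 4"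
    unfolding eq using sums_mult[OF t_sums[of n], of "\<kappa>\<^sup>2"] k2 Pp by simp
  have l2: "a \<in> l2v v" using sums1 by (auto simp: l2v_def sums_summable)
  have nv: "normv2 v a = 4" using sums1 by (simp add: normv2_def sums_iff)
  have pw: "ennreal (P n) * indicator {z. cmod z < \<rho> n} z \<le> ennreal ((cmod (Hop \<gamma> v a z))\<^sup>2)" for z
  proof (cases "cmod z < \<rho> n")
    case True
    define s where "s = (\<lambda>j. if n < j then complex_of_real (v j) / (cnj (\<gamma> j) * (z - \<gamma> j)) else 0)"
    have sm: "summable s" and lo: "P n / 2 \<le> cmod (suminf s)"
      using sumP[OF True] by (simp_all add: s_def)
    have "(\<lambda>j. a j * complex_of_real (v j) / (z - \<gamma> j)) = (\<lambda>j. complex_of_real \<kappa> * s j)"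
      by (auto simp: a_def s_def)
    hence H: "Hop \<gamma> v a z = complex_of_real \<kappa> * suminf s"
      unfolding Hop_def using suminf_mult[OF sm] by simp
    have "(P n / 2)\<^sup>2 \<le> (cmod (suminf s))\<^sup>2" using lo Pp by (intro power_mono) auto
    hence "\<kappa>\<^sup>2 * (P n / 2)\<^sup>2 \<le> \<kappa>\<^sup>2 * (cmod (suminf s))\<^sup>2" by (intro mult_left_mono) auto
    moreover have "\<kappa>\<^sup>2 * (P n / 2)\<^sup>2 = P n" using Pp unfolding k2 by (simp add: power2_eq_square)
    moreover have "(cmod (Hop \<gamma> v a z))\<^sup>2 = \<kappa>\<^sup>2 * (cmod (suminf s))\<^sup>2"
      unfolding H by (simp add: norm_mult power_mult_distrib)
    ultimately show ?thesis using True by (simp add: ennreal_leI)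
  qed simp
  have "(\<integral>\<^sup>+ z. ennreal (P n) * indicator {z. cmod z < \<rho> n} z \<partial>\<mu>)
        \<le> (\<integral>\<^sup>+ z. ennreal ((cmod (Hop \<gamma> v a z))\<^sup>2) \<partial>\<mu>)"
    by (rule nn_integral_mono) (rule pw)
  also have "\<dots> \<le> ennreal (C * normv2 v a)" by (rule bdd[OF l2])
  finally show ?thesis by (simp add: nv mult.commute)
qed

lemma ball_sets[measurable]: "{z::complex. cmod z < r} \<in> sets borel"
  by measurable
lemma ge_sets[measurable]: "{z::complex. r \<le> cmod z} \<in> sets borel"
  by measurable
lemma ann_sets[measurable]: "{z::complex. r \<le> cmod z \<and> cmod z < r'} \<in> sets borel"
  by measurable

lemma B_meas: "emeasure \<mu> {z. cmod z < \<rho> n} \<le> ennreal (4 * C / P n)"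
proof -
  have "ennreal (P n) * emeasure \<mu> {z. cmod z < \<rho> n} \<le> ennreal (4 * C)"
    using B_bound[of n] by (simp add: nn_integral_cmult_indicator borel)
  thus ?thesis using P_pos by (rule ennreal_div_helper[rotated])
qed

end


lemma key_real:
  fixes a b d K B e q :: real
  assumes a: "a > 0" and b: "b > 0" and d: "d > 0"
    and ab: "a \<le> (1 + e) * b" and ad: "q\<^sup>2 * a \<le> (1 + e) * d"
    and K: "K \<ge> 0" and q: "q > 0" and B: "B \<ge> 0" and e: "e \<ge> 0"
    and BK: "B * (1 - (1 + e) / q\<^sup>2) \<ge> K * (1 + e)"
  shows "K / b + B / d \<le> B / a"
proof -
  have q2: "q\<^sup>2 > 0" using q by simp
  have 1: "K / b \<le> K * (1 + e) / a"
  proof -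
    have "K * a \<le> K * ((1 + e) * b)" using ab K by (rule mult_left_mono)
    thus ?thesis using a b by (simp add: divide_simps mult.commute mult.left_commute)
  qed
  have 2: "B / d \<le> B * (1 + e) / (q\<^sup>2 * a)"
  proof -
    have "B * (q\<^sup>2 * a) \<le> B * ((1 + e) * d)" using ad B by (rule mult_left_mono)
    thus ?thesis using a d q2 by (simp add: divide_simps mult.commute mult.left_commute)
  qed
  have 3: "K * (1 + e) / a + B * (1 + e) / (q\<^sup>2 * a) = (K * (1 + e) + B * ((1 + e) / q\<^sup>2)) / a"
    using a q2 by (simp add: field_simps)
  have 4: "K * (1 + e) + B * ((1 + e) / q\<^sup>2) \<le> B" using BK by (simp add: algebra_simps)
  have "(K * (1 + e) + B * ((1 + e) / q\<^sup>2)) / a \<le> B / a" using 4 a by (simp add: divide_right_mono)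
  thus ?thesis using 1 2 3 by linarith
qed

lemma ennreal_half_helper:
  fixes D :: ennreal
  assumes "ennreal x \<le> D + ennreal y" "y \<le> x / 2" "y \<ge> 0"
  shows "ennreal (x / 2) \<le> D"
proof (cases D)
  case (real d)
  have d0: "d \<ge> 0" using real by simp
  have "ennreal d + ennreal y = ennreal (d + y)" using d0 assms(3) by (simp add: ennreal_plus)
  hence "ennreal x \<le> ennreal (d + y)" using assms(1) real by simp
  moreover have "0 \<le> d + y" using d0 assms(3) by simp
  ultimately have "x \<le> d + y" by (metis ennreal_le_iff)
  hence "x / 2 \<le> d" using assms by linarith
  thus ?thesis using real by (simp add: ennreal_leI)
qed simp

context L begin

definition \<eta>1 where "\<eta>1 = (q - 1) / (q + 1)"
definition \<eta>2 where "\<eta>2 = (q - 1) / (2 * q)"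

lemma eta_pos: "\<eta>1 > 0" "\<eta>2 > 0" using q by (simp_all add: \<eta>1_def \<eta>2_def)

lemma G1:
  assumes "\<rho> n \<le> cmod z"
  shows "v n / (cmod (z - \<gamma> n))\<^sup>2 \<le> (v n / \<eta>1\<^sup>2) / (cmod z)\<^sup>2"
proof -
  have zp: "cmod z > 0" using assms rho_pos[of n] by linarith
  have "g n * (1 + q) \<le> 2 * \<rho> n" using g_Suc[of n] by (simp add: \<rho>_def algebra_simps)
  hence gn: "g n * (1 + q) \<le> 2 * cmod z" using assms by linarith
  have "cmod z - g n \<le> cmod (z - \<gamma> n)" using norm_triangle_ineq2[of z "\<gamma> n"] by (simp add: g_def)
  moreover have "\<eta>1 * cmod z \<le> cmod z - g n"
  proof -
    have "(q - 1) * cmod z \<le> (cmod z - g n) * (q + 1)" using gn by (simp add: algebra_simps)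
    thus ?thesis using q by (simp add: \<eta>1_def divide_le_eq mult.commute)
  qed
  ultimately have dd: "\<eta>1 * cmod z \<le> cmod (z - \<gamma> n)" by linarith
  have p: "\<eta>1 * cmod z > 0" using eta_pos zp by simp
  have "(\<eta>1 * cmod z)\<^sup>2 \<le> (cmod (z - \<gamma> n))\<^sup>2" using dd p by (intro power_mono) auto
  hence "v n / (cmod (z - \<gamma> n))\<^sup>2 \<le> v n / (\<eta>1 * cmod z)\<^sup>2"
    using p vpos[of n] dd by (intro divide_left_mono mult_pos_pos) auto
  thus ?thesis by (simp add: power_mult_distrib)
qed

lemma G2:
  assumes n: "n \<ge> 1" and z: "cmod z < \<rho> (n - 1)"
  shows "v n / (cmod (z - \<gamma> n))\<^sup>2 \<le> (v n / \<eta>2\<^sup>2) / (g n)\<^sup>2"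
proof -
  have gp: "g n > 0" by (rule g_pos)
  have "q * g (n - 1) \<le> g n" using g_Suc[of "n-1"] n by simp
  hence "2 * q * \<rho> (n - 1) \<le> (1 + q) * g n" using n by (simp add: \<rho>_def algebra_simps)
  hence zz: "2 * q * cmod z \<le> (1 + q) * g n" using z q by (smt (verit) mult_left_mono)
  have "g n - cmod z \<le> cmod (z - \<gamma> n)" using norm_triangle_ineq2[of "\<gamma> n" z]
    by (simp add: g_def norm_minus_commute)
  moreover have "\<eta>2 * g n \<le> g n - cmod z"
  proof -
    have "(q - 1) * g n \<le> (g n - cmod z) * (2 * q)" using zz by (simp add: algebra_simps)
    thus ?thesis using q by (simp add: \<eta>2_def divide_le_eq mult.commute)
  qed
  ultimately have dd: "\<eta>2 * g n \<le> cmod (z - \<gamma> n)" by linarith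
  have p: "\<eta>2 * g n > 0" using eta_pos gp by simp
  have "(\<eta>2 * g n)\<^sup>2 \<le> (cmod (z - \<gamma> n))\<^sup>2" using dd p by (intro power_mono) auto
  hence "v n / (cmod (z - \<gamma> n))\<^sup>2 \<le> v n / (\<eta>2 * g n)\<^sup>2"
    using p vpos[of n] dd by (intro divide_left_mono mult_pos_pos) auto
  thus ?thesis by (simp add: power_mult_distrib)
qed

lemma Dset_sets[measurable]: "Dset \<gamma> v M n \<in> sets borel"
  unfolding Dset_def Omega_def by measurable

end

context L begin

definition \<epsilon> where "\<epsilon> = (q\<^sup>2 - 1) / 2"
definition th where "th = (1 + \<epsilon>) / q\<^sup>2"
definition BB where "BB = 4 * C * (1 + \<epsilon>) / (1 - th)"

lemma q2: "q\<^sup>2 > 1" using q by (simp add: one_less_power)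
lemma eps_pos: "\<epsilon> > 0" using q2 by (simp add: \<epsilon>_def)
lemma th_lt: "th < 1"
proof -
  have "1 + \<epsilon> < q\<^sup>2" using q2 unfolding \<epsilon>_def by (simp add: field_simps)
  thus ?thesis using q2 by (simp add: th_def divide_less_eq)
qed
lemma BB_nonneg: "BB \<ge> 0" using th_lt eps_pos C by (simp add: BB_def)
lemma BB_eq: "BB * (1 - th) = 4 * C * (1 + \<epsilon>)" using th_lt by (simp add: BB_def)
lemma BK: "B \<ge> BB \<Longrightarrow> B * (1 - (1 + \<epsilon>) / q\<^sup>2) \<ge> (4 * C) * (1 + \<epsilon>)"
  using BB_eq th_lt unfolding th_def[symmetric]
  by (metis diff_gt_0_iff_gt less_eq_real_def mult_right_mono)

lemma outer1:
  "(\<integral>\<^sup>+ z. ennreal (v n / (cmod (z - \<gamma> n))\<^sup>2) * indicator {z. \<rho> n \<le> cmod z} z \<partial>\<mu>)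
     \<le> ennreal (4 * C / \<eta>1\<^sup>2 * (v n / V (Suc n)))"
proof -
  define k where "k = v n / (\<eta>1\<^sup>2 * V (Suc n))"
  have kp: "k \<ge> 0" using vpos[of n] V_pos[of "Suc n"] by (simp add: k_def)
  have pw: "ennreal (v n / (cmod (z - \<gamma> n))\<^sup>2) * indicator {z. \<rho> n \<le> cmod z} z
     \<le> ennreal k * (ennreal (V (Suc n) / (cmod z)\<^sup>2) * indicator {z. \<rho> (Suc n - 1) \<le> cmod z} z)" for z
  proof (cases "\<rho> n \<le> cmod z")
    case True
    have "v n / (cmod (z - \<gamma> n))\<^sup>2 \<le> (v n / \<eta>1\<^sup>2) / (cmod z)\<^sup>2" by (rule G1[OF True])
    also have "\<dots> = k * (V (Suc n) / (cmod z)\<^sup>2)" using V_pos[of "Suc n"] by (simp add: k_def)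
    finally have h: "v n / (cmod (z - \<gamma> n))\<^sup>2 \<le> k * (V (Suc n) / (cmod z)\<^sup>2)" .
    have "ennreal (v n / (cmod (z - \<gamma> n))\<^sup>2) \<le> ennreal (k * (V (Suc n) / (cmod z)\<^sup>2))"
      by (rule ennreal_leI[OF h])
    also have "\<dots> = ennreal k * ennreal (V (Suc n) / (cmod z)\<^sup>2)"
      by (rule ennreal_mult) (use kp V_pos[of "Suc n"] in auto)
    finally show ?thesis using True by simp
  qed simp
  have "(\<integral>\<^sup>+ z. ennreal (v n / (cmod (z - \<gamma> n))\<^sup>2) * indicator {z. \<rho> n \<le> cmod z} z \<partial>\<mu>)
     \<le> (\<integral>\<^sup>+ z. ennreal k * (ennreal (V (Suc n) / (cmod z)\<^sup>2) * indicator {z. \<rho> (Suc n - 1) \<le> cmod z} z) \<partial>\<mu>)"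
    by (rule nn_integral_mono) (rule pw)
  also have "\<dots> = ennreal k * (\<integral>\<^sup>+ z. ennreal (V (Suc n) / (cmod z)\<^sup>2) * indicator {z. \<rho> (Suc n - 1) \<le> cmod z} z \<partial>\<mu>)"
    by (rule nn_integral_cmult) (unfold meas_mu, measurable)
  also have "\<dots> \<le> ennreal k * ennreal (4 * C)"
    by (rule mult_left_mono[OF A_bound]) auto
  also have "\<dots> = ennreal (4 * C / \<eta>1\<^sup>2 * (v n / V (Suc n)))"
    using kp C by (simp add: ennreal_mult[symmetric] k_def ac_simps)
  finally show ?thesis .
qed

end

context L begin

definition Xw where
  "Xw n k = (\<integral>\<^sup>+ z. ennreal (1 / (cmod z)\<^sup>2) * indicator {z. \<rho> n \<le> cmod z \<and> cmod z < \<rho> (n + k)} z \<partial>\<mu>)"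

lemma window:
  assumes hyp: "\<forall>m\<ge>N. v (Suc m) / (g (Suc m))\<^sup>2 \<le> \<epsilon> * P (Suc m)"
  shows "n \<ge> N \<Longrightarrow> Xw n k \<le> ennreal (BB / ((g n)\<^sup>2 * P n))"
proof (induction k arbitrary: n)
  case 0
  thus ?case by (simp add: Xw_def)
next
  case (Suc k)
  have split: "ennreal (1 / (cmod z)\<^sup>2) * indicator {z. \<rho> n \<le> cmod z \<and> cmod z < \<rho> (n + Suc k)} z =
     ennreal (1 / (cmod z)\<^sup>2) * indicator {z. \<rho> n \<le> cmod z \<and> cmod z < \<rho> (Suc n)} z +
     ennreal (1 / (cmod z)\<^sup>2) * indicator {z. \<rho> (Suc n) \<le> cmod z \<and> cmod z < \<rho> (Suc n + k)} z" for z
  proof -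
    have "\<rho> n \<le> \<rho> (Suc n)" "\<rho> (Suc n) \<le> \<rho> (Suc n + k)" by (auto intro: rho_le)
    thus ?thesis by (auto simp: indicator_def)
  qed
  have "Xw n (Suc k) = (\<integral>\<^sup>+ z. ennreal (1 / (cmod z)\<^sup>2) * indicator {z. \<rho> n \<le> cmod z \<and> cmod z < \<rho> (Suc n)} z \<partial>\<mu>)
      + Xw (Suc n) k"
    unfolding Xw_def split by (rule nn_integral_add) (unfold meas_mu, measurable)+
  also have "(\<integral>\<^sup>+ z. ennreal (1 / (cmod z)\<^sup>2) * indicator {z. \<rho> n \<le> cmod z \<and> cmod z < \<rho> (Suc n)} z \<partial>\<mu>)
      \<le> (\<integral>\<^sup>+ z. ennreal (1 / (\<rho> n)\<^sup>2) * indicator {z. cmod z < \<rho> (Suc n)} z \<partial>\<mu>)"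
  proof (rule nn_integral_mono)
    fix z
    show "ennreal (1 / (cmod z)\<^sup>2) * indicator {z. \<rho> n \<le> cmod z \<and> cmod z < \<rho> (Suc n)} z
        \<le> ennreal (1 / (\<rho> n)\<^sup>2) * indicator {z. cmod z < \<rho> (Suc n)} z"
    proof (cases "\<rho> n \<le> cmod z \<and> cmod z < \<rho> (Suc n)")
      case True
      have "(\<rho> n)\<^sup>2 \<le> (cmod z)\<^sup>2" using True rho_pos[of n] by (intro power_mono) auto
      moreover have "cmod z > 0" using True rho_pos[of n] by linarith
      ultimately have "1 / (cmod z)\<^sup>2 \<le> 1 / (\<rho> n)\<^sup>2" using rho_pos[of n] by (intro divide_left_mono) auto
      thus ?thesis using True by (simp add: ennreal_leI)
    qed auto
  qed
  also have "\<dots> = ennreal (1 / (\<rho> n)\<^sup>2) * emeasure \<mu> {z. cmod z < \<rho> (Suc n)}"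
    by (rule nn_integral_cmult_indicator) (simp add: borel)
  also have "\<dots> \<le> ennreal (1 / (\<rho> n)\<^sup>2) * ennreal (4 * C / P (Suc n))"
    by (rule mult_left_mono[OF B_meas]) auto
  also have "\<dots> = ennreal (4 * C / ((\<rho> n)\<^sup>2 * P (Suc n)))"
    using C P_pos[of "Suc n"] by (simp add: ennreal_mult[symmetric])
  also have "Xw (Suc n) k \<le> ennreal (BB / ((g (Suc n))\<^sup>2 * P (Suc n)))"
    using Suc by simp
  also have "ennreal (4 * C / ((\<rho> n)\<^sup>2 * P (Suc n))) + ennreal (BB / ((g (Suc n))\<^sup>2 * P (Suc n)))
     = ennreal (4 * C / ((\<rho> n)\<^sup>2 * P (Suc n)) + BB / ((g (Suc n))\<^sup>2 * P (Suc n)))"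
    using C BB_nonneg P_pos[of "Suc n"] by (simp add: ennreal_plus)
  also have "\<dots> \<le> ennreal (BB / ((g n)\<^sup>2 * P n))"
  proof (rule ennreal_leI)
    have Pn: "P n \<le> (1 + \<epsilon>) * P (Suc n)"
      using P_Suc[of n] hyp Suc.prems by (simp add: algebra_simps)
    have gr: "(g n)\<^sup>2 \<le> (\<rho> n)\<^sup>2" using rho_gt[of n] g_pos[of n] by (intro power_mono) auto
    have "(q * g n)\<^sup>2 \<le> (g (Suc n))\<^sup>2"
      by (rule power_mono) (use g_Suc[of n] q g_pos[of n] in auto)
    hence gq2: "q\<^sup>2 * (g n)\<^sup>2 \<le> (g (Suc n))\<^sup>2" by (simp add: power_mult_distrib)
    have ab: "(g n)\<^sup>2 * P n \<le> (1 + \<epsilon>) * ((\<rho> n)\<^sup>2 * P (Suc n))"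
    proof -
      have "(g n)\<^sup>2 * P n \<le> (\<rho> n)\<^sup>2 * ((1 + \<epsilon>) * P (Suc n))"
        using gr Pn P_pos[of n] by (intro mult_mono) auto
      thus ?thesis by (simp add: ac_simps)
    qed
    have ad: "q\<^sup>2 * ((g n)\<^sup>2 * P n) \<le> (1 + \<epsilon>) * ((g (Suc n))\<^sup>2 * P (Suc n))"
    proof -
      have "(q\<^sup>2 * (g n)\<^sup>2) * P n \<le> (g (Suc n))\<^sup>2 * ((1 + \<epsilon>) * P (Suc n))"
        using gq2 Pn P_pos[of n] by (intro mult_mono) auto
      thus ?thesis by (simp add: ac_simps)
    qed
    have a0: "(g n)\<^sup>2 * P n > 0" using g_pos[of n] P_pos[of n] by simp
    have b0: "(\<rho> n)\<^sup>2 * P (Suc n) > 0" using rho_pos[of n] P_pos[of "Suc n"] by simp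
    have d0: "(g (Suc n))\<^sup>2 * P (Suc n) > 0" using g_pos[of "Suc n"] P_pos[of "Suc n"] by simp
    have K0: "4 * C \<ge> 0" using C by simp
    have q0: "q > 0" using q by simp
    show "4 * C / ((\<rho> n)\<^sup>2 * P (Suc n)) + BB / ((g (Suc n))\<^sup>2 * P (Suc n)) \<le> BB / ((g n)\<^sup>2 * P n)"
      by (rule key_real[OF a0 b0 d0 ab ad K0 q0 BB_nonneg less_imp_le[OF eps_pos] BK[OF order_refl]])
  qed
  finally show ?case by (simp add: add_mono)
qed

end

context L begin

lemma Ybound:
  assumes hyp: "\<forall>m\<ge>N. v (Suc m) / (g (Suc m))\<^sup>2 \<le> \<epsilon> * P (Suc m)" and n: "n \<ge> N"
  shows "(\<integral>\<^sup>+ z. ennreal (1 / (cmod z)\<^sup>2) * indicator {z. \<rho> n \<le> cmod z} z \<partial>\<mu>)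
          \<le> ennreal (BB / ((g n)\<^sup>2 * P n))"
proof -
  define F where "F k z = ennreal (1 / (cmod z)\<^sup>2) * indicator {z. \<rho> n \<le> cmod z \<and> cmod z < \<rho> (n + k)} z" for k z
  have inc: "incseq F"
  proof (rule incseq_SucI, rule le_funI)
    fix k z
    have "\<rho> (n + k) \<le> \<rho> (n + Suc k)" by (rule rho_le) simp
    thus "F k z \<le> F (Suc k) z" by (auto simp: F_def indicator_def)
  qed
  have mF: "F k \<in> borel_measurable \<mu>" for k unfolding F_def meas_mu by measurable
  have pw: "ennreal (1 / (cmod z)\<^sup>2) * indicator {z. \<rho> n \<le> cmod z} z \<le> (SUP k. F k z)" for z
  proof (cases "\<rho> n \<le> cmod z")
    case True
    obtain k where k: "cmod z < \<rho> (n + k)" using rho_unbounded by blast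
    have "ennreal (1 / (cmod z)\<^sup>2) * indicator {z. \<rho> n \<le> cmod z} z = F k z"
      using True k by (simp add: F_def)
    also have "\<dots> \<le> (SUP k. F k z)" by (rule SUP_upper) simp
    finally show ?thesis .
  qed simp
  have "(\<integral>\<^sup>+ z. ennreal (1 / (cmod z)\<^sup>2) * indicator {z. \<rho> n \<le> cmod z} z \<partial>\<mu>)
        \<le> (\<integral>\<^sup>+ z. (SUP k. F k z) \<partial>\<mu>)"
    by (rule nn_integral_mono) (rule pw)
  also have "\<dots> = (SUP k. integral\<^sup>N \<mu> (F k))"
    by (rule nn_integral_monotone_convergence_SUP[OF inc mF])
  also have "\<dots> \<le> ennreal (BB / ((g n)\<^sup>2 * P n))"
  proof (rule SUP_least)
    fix k
    have "integral\<^sup>N \<mu> (F k) = Xw n k" by (simp add: F_def[abs_def] Xw_def)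
    also have "\<dots> \<le> ennreal (BB / ((g n)\<^sup>2 * P n))" by (rule window[OF hyp n])
    finally show "integral\<^sup>N \<mu> (F k) \<le> ennreal (BB / ((g n)\<^sup>2 * P n))" .
  qed
  finally show ?thesis .
qed

lemma outer2:
  assumes hyp: "\<forall>m\<ge>N. v (Suc m) / (g (Suc m))\<^sup>2 \<le> \<epsilon> * P (Suc m)" and n: "n \<ge> N"
  shows "(\<integral>\<^sup>+ z. ennreal (v n / (cmod (z - \<gamma> n))\<^sup>2) * indicator {z. \<rho> n \<le> cmod z} z \<partial>\<mu>)
     \<le> ennreal (BB / \<eta>1\<^sup>2 * (v n / ((g n)\<^sup>2 * P n)))"
proof -
  define k where "k = v n / \<eta>1\<^sup>2"
  have kp: "k \<ge> 0" using vpos[of n] by (simp add: k_def)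
  have pw: "ennreal (v n / (cmod (z - \<gamma> n))\<^sup>2) * indicator {z. \<rho> n \<le> cmod z} z
     \<le> ennreal k * (ennreal (1 / (cmod z)\<^sup>2) * indicator {z. \<rho> n \<le> cmod z} z)" for z
  proof (cases "\<rho> n \<le> cmod z")
    case True
    have "v n / (cmod (z - \<gamma> n))\<^sup>2 \<le> (v n / \<eta>1\<^sup>2) / (cmod z)\<^sup>2" by (rule G1[OF True])
    also have "\<dots> = k * (1 / (cmod z)\<^sup>2)" by (simp add: k_def)
    finally have h: "v n / (cmod (z - \<gamma> n))\<^sup>2 \<le> k * (1 / (cmod z)\<^sup>2)" .
    have "ennreal (v n / (cmod (z - \<gamma> n))\<^sup>2) \<le> ennreal (k * (1 / (cmod z)\<^sup>2))"
      by (rule ennreal_leI[OF h])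
    also have "\<dots> = ennreal k * ennreal (1 / (cmod z)\<^sup>2)"
      by (rule ennreal_mult) (use kp in auto)
    finally show ?thesis using True by simp
  qed simp
  have "(\<integral>\<^sup>+ z. ennreal (v n / (cmod (z - \<gamma> n))\<^sup>2) * indicator {z. \<rho> n \<le> cmod z} z \<partial>\<mu>)
     \<le> (\<integral>\<^sup>+ z. ennreal k * (ennreal (1 / (cmod z)\<^sup>2) * indicator {z. \<rho> n \<le> cmod z} z) \<partial>\<mu>)"
    by (rule nn_integral_mono) (rule pw)
  also have "\<dots> = ennreal k * (\<integral>\<^sup>+ z. ennreal (1 / (cmod z)\<^sup>2) * indicator {z. \<rho> n \<le> cmod z} z \<partial>\<mu>)"
    by (rule nn_integral_cmult) (unfold meas_mu, measurable)
  also have "\<dots> \<le> ennreal k * ennreal (BB / ((g n)\<^sup>2 * P n))"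
    by (rule mult_left_mono[OF Ybound[OF hyp n]]) auto
  also have "\<dots> = ennreal (BB / \<eta>1\<^sup>2 * (v n / ((g n)\<^sup>2 * P n)))"
    using kp BB_nonneg g_pos[of n] P_pos[of n] by (simp add: ennreal_mult[symmetric] k_def ac_simps)
  finally show ?thesis .
qed

end

context L begin

lemma inner_gen:
  assumes n: "n \<ge> 1"
  shows "(\<integral>\<^sup>+ z. ennreal (v n / (cmod (z - \<gamma> n))\<^sup>2) * indicator {z. cmod z < \<rho> (n - 1)} z \<partial>\<mu>)
     \<le> ennreal (v n / (\<eta>2\<^sup>2 * (g n)\<^sup>2)) * emeasure \<mu> {z. cmod z < \<rho> (n - 1)}"
proof -
  have "(\<integral>\<^sup>+ z. ennreal (v n / (cmod (z - \<gamma> n))\<^sup>2) * indicator {z. cmod z < \<rho> (n - 1)} z \<partial>\<mu>)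
     \<le> (\<integral>\<^sup>+ z. ennreal (v n / (\<eta>2\<^sup>2 * (g n)\<^sup>2)) * indicator {z. cmod z < \<rho> (n - 1)} z \<partial>\<mu>)"
  proof (rule nn_integral_mono)
    fix z
    show "ennreal (v n / (cmod (z - \<gamma> n))\<^sup>2) * indicator {z. cmod z < \<rho> (n - 1)} z
        \<le> ennreal (v n / (\<eta>2\<^sup>2 * (g n)\<^sup>2)) * indicator {z. cmod z < \<rho> (n - 1)} z"
    proof (cases "cmod z < \<rho> (n - 1)")
      case True
      have "v n / (cmod (z - \<gamma> n))\<^sup>2 \<le> v n / (\<eta>2\<^sup>2 * (g n)\<^sup>2)"
        using G2[OF n True] by simp
      thus ?thesis using True by (simp add: ennreal_leI)
    qed simp
  qed
  also have "\<dots> = ennreal (v n / (\<eta>2\<^sup>2 * (g n)\<^sup>2)) * emeasure \<mu> {z. cmod z < \<rho> (n - 1)}"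
    by (rule nn_integral_cmult_indicator) (simp add: borel)
  finally show ?thesis .
qed

lemma inner2:
  assumes n: "n \<ge> 1"
  shows "(\<integral>\<^sup>+ z. ennreal (v n / (cmod (z - \<gamma> n))\<^sup>2) * indicator {z. cmod z < \<rho> (n - 1)} z \<partial>\<mu>)
     \<le> ennreal (4 * C / \<eta>2\<^sup>2 * (v n / ((g n)\<^sup>2 * P n)))"
proof -
  have Pm: "P n \<le> P (n - 1)" using P_mono[of "n-1"] n by simp
  have "4 * C / P (n - 1) \<le> 4 * C / P n"
    using Pm P_pos[of n] C by (intro divide_left_mono) auto
  hence m: "emeasure \<mu> {z. cmod z < \<rho> (n - 1)} \<le> ennreal (4 * C / P n)"
    using B_meas[of "n-1"] by (meson ennreal_leI order_trans)
  have "(\<integral>\<^sup>+ z. ennreal (v n / (cmod (z - \<gamma> n))\<^sup>2) * indicator {z. cmod z < \<rho> (n - 1)} z \<partial>\<mu>)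
     \<le> ennreal (v n / (\<eta>2\<^sup>2 * (g n)\<^sup>2)) * emeasure \<mu> {z. cmod z < \<rho> (n - 1)}"
    by (rule inner_gen[OF n])
  also have "\<dots> \<le> ennreal (v n / (\<eta>2\<^sup>2 * (g n)\<^sup>2)) * ennreal (4 * C / P n)"
    by (rule mult_left_mono[OF m]) auto
  also have "\<dots> = ennreal (4 * C / \<eta>2\<^sup>2 * (v n / ((g n)\<^sup>2 * P n)))"
    using vpos[of n] C P_pos[of n] by (simp add: ennreal_mult[symmetric] ac_simps)
  finally show ?thesis .
qed

lemma Omega_meas:
  "emeasure \<mu> {z. \<rho> m \<le> cmod z \<and> cmod z < \<rho> (Suc m)} \<le> ennreal (4 * C / (V (Suc m) / (\<rho> (Suc m))\<^sup>2))"
proof -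
  have Vp: "V (Suc m) / (\<rho> (Suc m))\<^sup>2 > 0" using V_pos[of "Suc m"] rho_pos[of "Suc m"] by simp
  have "ennreal (V (Suc m) / (\<rho> (Suc m))\<^sup>2) * emeasure \<mu> {z. \<rho> m \<le> cmod z \<and> cmod z < \<rho> (Suc m)}
     = (\<integral>\<^sup>+ z. ennreal (V (Suc m) / (\<rho> (Suc m))\<^sup>2) * indicator {z. \<rho> m \<le> cmod z \<and> cmod z < \<rho> (Suc m)} z \<partial>\<mu>)"
    by (rule nn_integral_cmult_indicator[symmetric]) (simp add: borel)
  also have "\<dots> \<le> (\<integral>\<^sup>+ z. ennreal (V (Suc m) / (cmod z)\<^sup>2) * indicator {z. \<rho> (Suc m - 1) \<le> cmod z} z \<partial>\<mu>)"
  proof (rule nn_integral_mono)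
    fix z
    show "ennreal (V (Suc m) / (\<rho> (Suc m))\<^sup>2) * indicator {z. \<rho> m \<le> cmod z \<and> cmod z < \<rho> (Suc m)} z
      \<le> ennreal (V (Suc m) / (cmod z)\<^sup>2) * indicator {z. \<rho> (Suc m - 1) \<le> cmod z} z"
    proof (cases "\<rho> m \<le> cmod z \<and> cmod z < \<rho> (Suc m)")
      case True
      have zp: "cmod z > 0" using True rho_pos[of m] by linarith
      have "(cmod z)\<^sup>2 \<le> (\<rho> (Suc m))\<^sup>2" using True zp by (intro power_mono) auto
      hence "V (Suc m) / (\<rho> (Suc m))\<^sup>2 \<le> V (Suc m) / (cmod z)\<^sup>2"
        using zp V_pos[of "Suc m"] rho_pos[of "Suc m"] by (intro divide_left_mono) auto
      thus ?thesis using True by (simp add: ennreal_leI)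
    qed auto
  qed
  also have "\<dots> \<le> ennreal (4 * C)" by (rule A_bound) simp
  finally show ?thesis by (rule ennreal_div_helper[OF Vp])
qed

end

context L begin

lemma Zbound:
  assumes hyp: "\<forall>m\<ge>N. v m \<le> \<epsilon> * V m" and N: "N \<ge> 1" and B1: "B1 \<ge> BB"
    and bs: "4 * C / P N \<le> B1 / (V (Suc N) / (g (Suc N))\<^sup>2)"
  shows "m \<ge> N \<Longrightarrow> emeasure \<mu> {z. cmod z < \<rho> m} \<le> ennreal (B1 / (V (Suc m) / (g (Suc m))\<^sup>2))"
proof (induction m rule: nat_induct_at_least)
  case base
  show ?case using B_meas[of N] bs by (meson ennreal_leI order_trans)
next
  case (Suc m)
  let ?a = "V (Suc (Suc m)) / (g (Suc (Suc m)))\<^sup>2"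
  let ?b = "V (Suc m) / (\<rho> (Suc m))\<^sup>2"
  let ?d = "V (Suc m) / (g (Suc m))\<^sup>2"
  have sub: "{z. cmod z < \<rho> (Suc m)} \<subseteq> {z. cmod z < \<rho> m} \<union> {z. \<rho> m \<le> cmod z \<and> cmod z < \<rho> (Suc m)}"
    by auto
  have "emeasure \<mu> {z. cmod z < \<rho> (Suc m)}
      \<le> emeasure \<mu> ({z. cmod z < \<rho> m} \<union> {z. \<rho> m \<le> cmod z \<and> cmod z < \<rho> (Suc m)})"
    by (rule emeasure_mono[OF sub]) (simp add: borel)
  also have "\<dots> \<le> emeasure \<mu> {z. cmod z < \<rho> m} + emeasure \<mu> {z. \<rho> m \<le> cmod z \<and> cmod z < \<rho> (Suc m)}"
    by (rule emeasure_subadditive) (simp_all add: borel)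
  also have "\<dots> \<le> ennreal (B1 / ?d) + ennreal (4 * C / ?b)"
    by (rule add_mono[OF Suc.IH Omega_meas])
  also have "\<dots> = ennreal (4 * C / ?b + B1 / ?d)"
    using C BB_nonneg B1 V_pos[of "Suc m"] by (subst ennreal_plus[symmetric]) (auto simp: add.commute)
  also have "\<dots> \<le> ennreal (B1 / ?a)"
  proof (rule ennreal_leI)
    have V2: "V (Suc (Suc m)) \<le> (1 + \<epsilon>) * V (Suc m)"
      using V_Suc[of "Suc m"] hyp Suc.hyps by (simp add: algebra_simps)
    have g1: "g (Suc m) > 0" "g (Suc (Suc m)) > 0" "\<rho> (Suc m) > 0" using g_pos rho_pos by auto
    have rg: "(\<rho> (Suc m))\<^sup>2 \<le> (g (Suc (Suc m)))\<^sup>2"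
      using rho_lt[of "Suc m"] g1 by (intro power_mono) auto
    have "(q * g (Suc m))\<^sup>2 \<le> (g (Suc (Suc m)))\<^sup>2"
      by (rule power_mono) (use g_Suc[of "Suc m"] q g_pos[of "Suc m"] in auto)
    hence gq2: "q\<^sup>2 * (g (Suc m))\<^sup>2 \<le> (g (Suc (Suc m)))\<^sup>2" by (simp add: power_mult_distrib)
    have ab: "?a \<le> (1 + \<epsilon>) * ?b"
    proof -
      have "V (Suc (Suc m)) * (\<rho> (Suc m))\<^sup>2 \<le> ((1 + \<epsilon>) * V (Suc m)) * (g (Suc (Suc m)))\<^sup>2"
        using V2 rg V_pos[of "Suc m"] V_pos[of "Suc (Suc m)"] eps_pos by (intro mult_mono) auto
      thus ?thesis using g1 by (simp add: field_simps)
    qed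
    have ad: "q\<^sup>2 * ?a \<le> (1 + \<epsilon>) * ?d"
    proof -
      have "(q\<^sup>2 * (g (Suc m))\<^sup>2) * V (Suc (Suc m)) \<le> (g (Suc (Suc m)))\<^sup>2 * ((1 + \<epsilon>) * V (Suc m))"
        using V2 gq2 V_pos[of "Suc m"] V_pos[of "Suc (Suc m)"] eps_pos by (intro mult_mono) auto
      thus ?thesis using g1 by (simp add: field_simps)
    qed
    have a0: "?a > 0" using V_pos g1 by simp
    have b0: "?b > 0" using V_pos g1 by simp
    have d0: "?d > 0" using V_pos g1 by simp
    have K0: "4 * C \<ge> 0" using C by simp
    have q0: "q > 0" using q by simp
    have B10: "B1 \<ge> 0" using B1 BB_nonneg by linarith
    show "4 * C / ?b + B1 / ?d \<le> B1 / ?a"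
      by (rule key_real[OF a0 b0 d0 ab ad K0 q0 B10 less_imp_le[OF eps_pos] BK[OF B1]])
  qed
  finally show ?case .
qed

end

context L begin

abbreviation "fo n \<equiv> (\<integral>\<^sup>+ z. ennreal (v n / (cmod (z - \<gamma> n))\<^sup>2) * indicator {z. \<rho> n \<le> cmod z} z \<partial>\<mu>)"
abbreviation "fi n \<equiv> (\<integral>\<^sup>+ z. ennreal (v n / (cmod (z - \<gamma> n))\<^sup>2) * indicator {z. cmod z < \<rho> (n - 1)} z \<partial>\<mu>)"

lemma tail:
  assumes growth: "(\<lambda>n. v n) \<in> o(\<lambda>n. V n) \<or> (\<lambda>n. v n / (cmod (\<gamma> n))\<^sup>2) \<in> o(\<lambda>n. P n)"
  shows "\<exists>K\<ge>0. \<exists>r. (\<forall>e>0. eventually (\<lambda>n. r n \<le> e) sequentially) \<and>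
           eventually (\<lambda>n. fo n + fi n \<le> ennreal (K * r n)) sequentially"
  using growth
proof
  assume o1: "(\<lambda>n. v n) \<in> o(\<lambda>n. V n)"
  have small: "eventually (\<lambda>n. v n / V n \<le> e) sequentially" if "e > 0" for e
  proof -
    have "eventually (\<lambda>n. norm (v n) \<le> e * norm (V n)) sequentially"
      using landau_o.smallD[OF o1 that] .
    thus ?thesis
    proof eventually_elim
      case (elim n)
      thus ?case using vpos[of n] V_pos[of n] by (simp add: divide_le_eq)
    qed
  qed
  obtain N0 where N0: "\<forall>n\<ge>N0. v n \<le> \<epsilon> * V n"
  proof -
    have "eventually (\<lambda>n. norm (v n) \<le> \<epsilon> * norm (V n)) sequentially"
      using landau_o.smallD[OF o1 eps_pos] .
    then obtain N0 where "\<forall>n\<ge>N0. norm (v n) \<le> \<epsilon> * norm (V n)" by (auto simp: eventually_sequentially)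
    hence "\<forall>n\<ge>N0. v n \<le> \<epsilon> * V n"
      using vpos V_pos by (simp add: abs_of_pos less_imp_le)
    thus ?thesis by (rule that)
  qed
  define N where "N = max N0 1"
  have hyp: "\<forall>m\<ge>N. v m \<le> \<epsilon> * V m" using N0 by (simp add: N_def)
  have N1: "N \<ge> 1" by (simp add: N_def)
  define dN where "dN = V (Suc N) / (g (Suc N))\<^sup>2"
  have dN0: "dN > 0" using V_pos g_pos[of "Suc N"] by (simp add: dN_def)
  define B1 where "B1 = max BB (4 * C / P N * dN)"
  have B1: "B1 \<ge> BB" by (simp add: B1_def)
  have bs: "4 * C / P N \<le> B1 / (V (Suc N) / (g (Suc N))\<^sup>2)"
  proof -
    have "4 * C / P N * dN \<le> B1" by (simp add: B1_def)
    thus ?thesis using dN0 by (simp add: dN_def[symmetric] le_divide_eq)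
  qed
  define K where "K = 4 * C / \<eta>1\<^sup>2 + B1 / \<eta>2\<^sup>2"
  have K0: "K \<ge> 0" using C B1 BB_nonneg eta_pos by (simp add: K_def)
  have ev: "eventually (\<lambda>n. fo n + fi n \<le> ennreal (K * (v n / V n))) sequentially"
    unfolding eventually_sequentially
  proof (intro exI allI impI)
    fix n assume n: "Suc N \<le> n"
    have n1: "n \<ge> 1" using n by simp
    have Vn: "V n \<le> V (Suc n)" by (rule V_mono[OF n1])
    have r0: "v n / V n \<ge> 0" using vpos[of n] V_pos[of n] by simp
    have o: "fo n \<le> ennreal (4 * C / \<eta>1\<^sup>2 * (v n / V n))"
    proof -
      have "v n / V (Suc n) \<le> v n / V n" using Vn V_pos[of n] vpos[of n] by (intro divide_left_mono) auto
      hence "4 * C / \<eta>1\<^sup>2 * (v n / V (Suc n)) \<le> 4 * C / \<eta>1\<^sup>2 * (v n / V n)"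
        using C by (intro mult_left_mono) auto
      thus ?thesis using outer1[of n] by (meson ennreal_leI order_trans)
    qed
    have Z: "emeasure \<mu> {z. cmod z < \<rho> (n - 1)} \<le> ennreal (B1 / (V n / (g n)\<^sup>2))"
      using Zbound[OF hyp N1 B1 bs, of "n - 1"] n by simp
    have i: "fi n \<le> ennreal (B1 / \<eta>2\<^sup>2 * (v n / V n))"
    proof -
      have "fi n \<le> ennreal (v n / (\<eta>2\<^sup>2 * (g n)\<^sup>2)) * emeasure \<mu> {z. cmod z < \<rho> (n - 1)}"
        by (rule inner_gen[OF n1])
      also have "\<dots> \<le> ennreal (v n / (\<eta>2\<^sup>2 * (g n)\<^sup>2)) * ennreal (B1 / (V n / (g n)\<^sup>2))"
        by (rule mult_left_mono[OF Z]) auto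
      also have "\<dots> = ennreal (v n / (\<eta>2\<^sup>2 * (g n)\<^sup>2) * (B1 / (V n / (g n)\<^sup>2)))"
        using vpos[of n] B1 BB_nonneg V_pos[of n] by (subst ennreal_mult) auto
      also have "v n / (\<eta>2\<^sup>2 * (g n)\<^sup>2) * (B1 / (V n / (g n)\<^sup>2)) = B1 / \<eta>2\<^sup>2 * (v n / V n)"
        using eta_pos g_pos[of n] V_pos[of n] by (simp add: field_simps)
      finally show ?thesis .
    qed
    have "fo n + fi n \<le> ennreal (4 * C / \<eta>1\<^sup>2 * (v n / V n)) + ennreal (B1 / \<eta>2\<^sup>2 * (v n / V n))"
      by (rule add_mono[OF o i])
    also have "\<dots> = ennreal (4 * C / \<eta>1\<^sup>2 * (v n / V n) + B1 / \<eta>2\<^sup>2 * (v n / V n))"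
    proof (rule ennreal_plus[symmetric])
      show "0 \<le> 4 * C / \<eta>1\<^sup>2 * (v n / V n)" by (rule mult_nonneg_nonneg[OF _ r0]) (use C in simp)
      show "0 \<le> B1 / \<eta>2\<^sup>2 * (v n / V n)" by (rule mult_nonneg_nonneg[OF _ r0]) (use B1 BB_nonneg in simp)
    qed
    also have "4 * C / \<eta>1\<^sup>2 * (v n / V n) + B1 / \<eta>2\<^sup>2 * (v n / V n) = K * (v n / V n)"
      by (simp add: K_def algebra_simps)
    finally show "fo n + fi n \<le> ennreal (K * (v n / V n))" .
  qed
  show ?thesis
  proof (rule exI[of _ K], rule conjI[OF K0], rule exI[of _ "\<lambda>n. v n / V n"], rule conjI)
    show "\<forall>e>0. eventually (\<lambda>n. v n / V n \<le> e) sequentially" using small by blast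
    show "eventually (\<lambda>n. fo n + fi n \<le> ennreal (K * (v n / V n))) sequentially" by (rule ev)
  qed
next
  assume o2: "(\<lambda>n. v n / (cmod (\<gamma> n))\<^sup>2) \<in> o(\<lambda>n. P n)"
  have small0: "eventually (\<lambda>n. v n / (g n)\<^sup>2 \<le> e * P n) sequentially" if "e > 0" for e
  proof -
    have "eventually (\<lambda>n. norm (v n / (cmod (\<gamma> n))\<^sup>2) \<le> e * norm (P n)) sequentially"
      using landau_o.smallD[OF o2 that] .
    thus ?thesis
    proof eventually_elim
      case (elim n)
      thus ?case using vpos[of n] P_pos[of n] by (simp add: g_def)
    qed
  qed
  have small: "eventually (\<lambda>n. v n / ((g n)\<^sup>2 * P n) \<le> e) sequentially" if "e > 0" for e
    using small0[OF that]
  proof eventually_elim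
    case (elim n)
    have "v n / ((g n)\<^sup>2 * P n) = (v n / (g n)\<^sup>2) / P n" by (simp only: divide_divide_eq_left)
    also have "\<dots> \<le> e" using elim P_pos[of n] by (metis pos_divide_le_eq)
    finally show ?case .
  qed
  obtain N where N: "\<forall>n\<ge>N. v n / (g n)\<^sup>2 \<le> \<epsilon> * P n"
    using small0[OF eps_pos] by (auto simp: eventually_sequentially)
  have hyp: "\<forall>m\<ge>N. v (Suc m) / (g (Suc m))\<^sup>2 \<le> \<epsilon> * P (Suc m)" using N by simp
  define K where "K = BB / \<eta>1\<^sup>2 + 4 * C / \<eta>2\<^sup>2"
  have K0: "K \<ge> 0" using C BB_nonneg eta_pos by (simp add: K_def)
  have ev: "eventually (\<lambda>n. fo n + fi n \<le> ennreal (K * (v n / ((g n)\<^sup>2 * P n)))) sequentially"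
    unfolding eventually_sequentially
  proof (intro exI allI impI)
    fix n assume n: "Suc N \<le> n"
    have n1: "n \<ge> 1" using n by simp
    have r0: "v n / ((g n)\<^sup>2 * P n) \<ge> 0" using vpos[of n] P_pos[of n] by simp
    have "fo n + fi n \<le> ennreal (BB / \<eta>1\<^sup>2 * (v n / ((g n)\<^sup>2 * P n))) + ennreal (4 * C / \<eta>2\<^sup>2 * (v n / ((g n)\<^sup>2 * P n)))"
      by (rule add_mono[OF outer2[OF hyp] inner2[OF n1]]) (use n in simp)
    also have "\<dots> = ennreal (BB / \<eta>1\<^sup>2 * (v n / ((g n)\<^sup>2 * P n)) + 4 * C / \<eta>2\<^sup>2 * (v n / ((g n)\<^sup>2 * P n)))"
    proof (rule ennreal_plus[symmetric])
      show "0 \<le> BB / \<eta>1\<^sup>2 * (v n / ((g n)\<^sup>2 * P n))" by (rule mult_nonneg_nonneg[OF _ r0]) (use BB_nonneg in simp)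
      show "0 \<le> 4 * C / \<eta>2\<^sup>2 * (v n / ((g n)\<^sup>2 * P n))" by (rule mult_nonneg_nonneg[OF _ r0]) (use C in simp)
    qed
    also have "BB / \<eta>1\<^sup>2 * (v n / ((g n)\<^sup>2 * P n)) + 4 * C / \<eta>2\<^sup>2 * (v n / ((g n)\<^sup>2 * P n)) = K * (v n / ((g n)\<^sup>2 * P n))"
      by (simp add: K_def algebra_simps)
    finally show "fo n + fi n \<le> ennreal (K * (v n / ((g n)\<^sup>2 * P n)))" .
  qed
  show ?thesis
  proof (rule exI[of _ K], rule conjI[OF K0], rule exI[of _ "\<lambda>n. v n / ((g n)\<^sup>2 * P n)"], rule conjI)
    show "\<forall>e>0. eventually (\<lambda>n. v n / ((g n)\<^sup>2 * P n) \<le> e) sequentially" using small by blast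
    show "eventually (\<lambda>n. fo n + fi n \<le> ennreal (K * (v n / ((g n)\<^sup>2 * P n)))) sequentially" by (rule ev)
  qed
qed

end

context L begin

lemma pointwise_decomp:
  assumes n: "n \<ge> 1" and M: "M > 0"
  shows "ennreal (v n / (cmod (z - \<gamma> n))\<^sup>2) \<le>
     ennreal (v n / (cmod (z - \<gamma> n))\<^sup>2) * indicator (Dset \<gamma> v M n) z +
     ennreal (1 / M) * (ennreal (V n / (cmod z)\<^sup>2) * indicator {z. \<rho> (n - 1) \<le> cmod z} z
                        + ennreal (P n) * indicator {z. cmod z < \<rho> n} z) +
     (ennreal (v n / (cmod (z - \<gamma> n))\<^sup>2) * indicator {z. \<rho> n \<le> cmod z} z
      + ennreal (v n / (cmod (z - \<gamma> n))\<^sup>2) * indicator {z. cmod z < \<rho> (n - 1)} z)"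
  (is "?F \<le> ?t1 + ?T2 + (?t3 + ?t4)")
proof -
  consider (i) "cmod z < \<rho> (n - 1)" | (ii) "\<rho> n \<le> cmod z" | (iii) "\<rho> (n - 1) \<le> cmod z" "cmod z < \<rho> n"
    by linarith
  thus ?thesis
  proof cases
    case i
    hence "?F \<le> ?t3 + ?t4" by (simp add: add_increasing)
    thus ?thesis by (rule add_increasing[OF zero_le])
  next
    case ii
    hence "?F \<le> ?t3 + ?t4" by (simp add: add_increasing2)
    thus ?thesis by (rule add_increasing[OF zero_le])
  next
    case iii
    have F2: "?F \<le> ?t1 + ?T2"
    proof (cases "z \<in> Dset \<gamma> v M n")
      case True
      thus ?thesis by (simp add: add_increasing2)
    next
      case False
      have zO: "z \<in> Omega \<gamma> n" using iii Omega_eq[OF n] by simp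
      have zp: "cmod z > 0" using iii(1) rho_pos[of "n-1"] by linarith
      hence z0: "z \<noteq> 0" by auto
      have "\<not> (z = \<gamma> n \<or> M * v n / (cmod (z - \<gamma> n))\<^sup>2 \<ge> max (V n / (cmod z)\<^sup>2) (P n))"
        using False zO z0 by (simp add: Dset_def)
      hence lt: "M * v n / (cmod (z - \<gamma> n))\<^sup>2 < max (V n / (cmod z)\<^sup>2) (P n)"
        using not_le by blast
      have mx: "max (V n / (cmod z)\<^sup>2) (P n) \<le> V n / (cmod z)\<^sup>2 + P n"
        using V_pos[of n] P_pos[of n] by (simp add: max_def)
      have eqM: "M * (v n / (cmod (z - \<gamma> n))\<^sup>2) = M * v n / (cmod (z - \<gamma> n))\<^sup>2" by simp
      have "M * (v n / (cmod (z - \<gamma> n))\<^sup>2) \<le> V n / (cmod z)\<^sup>2 + P n" using lt mx eqM by linarith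
      hence le: "v n / (cmod (z - \<gamma> n))\<^sup>2 \<le> 1 / M * (V n / (cmod z)\<^sup>2 + P n)"
        using M by (simp add: field_simps)
      have "?T2 = ennreal (1 / M) * (ennreal (V n / (cmod z)\<^sup>2) + ennreal (P n))" using iii by simp
      also have "\<dots> = ennreal (1 / M * (V n / (cmod z)\<^sup>2 + P n))"
      proof -
        have a0: "0 \<le> V n / (cmod z)\<^sup>2" using V_pos[of n] by simp
        have b0: "0 \<le> P n" using P_pos[of n] by simp
        have m0: "0 \<le> 1 / M" using M by simp
        have ab0: "0 \<le> V n / (cmod z)\<^sup>2 + P n" using a0 b0 by simp
        show ?thesis by (simp only: ennreal_plus[OF a0 b0, symmetric] ennreal_mult[OF m0 ab0, symmetric])
      qed
      finally have "?F \<le> ?T2" using le by (simp add: ennreal_leI)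
      thus ?thesis by (rule add_increasing[OF zero_le])
    qed
    thus ?thesis by (rule add_increasing2[OF zero_le])
  qed
qed

end

context L begin

lemma decomp:
  assumes n: "n \<ge> 1" and M: "M > 0"
  shows "ennreal (c\<^sup>2) \<le> (\<integral>\<^sup>+ z \<in> Dset \<gamma> v M n. ennreal (v n / (cmod (z - \<gamma> n))\<^sup>2) \<partial>\<mu>)
     + ennreal (1 / M) * (ennreal (4 * C) + ennreal (4 * C)) + (fo n + fi n)"
proof -
  define f where "f z = ennreal (v n / (cmod (z - \<gamma> n))\<^sup>2)" for z
  define t1 where "t1 z = f z * indicator (Dset \<gamma> v M n) z" for z
  define a where "a z = ennreal (V n / (cmod z)\<^sup>2) * indicator {z. \<rho> (n - 1) \<le> cmod z} z" for z
  define b where "b z = ennreal (P n) * indicator {z. cmod z < \<rho> n} z" for z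
  define t3 where "t3 z = f z * indicator {z. \<rho> n \<le> cmod z} z" for z
  define t4 where "t4 z = f z * indicator {z. cmod z < \<rho> (n - 1)} z" for z
  have mf: "f \<in> borel_measurable \<mu>" unfolding f_def[abs_def] meas_mu by measurable
  have m1: "t1 \<in> borel_measurable \<mu>" unfolding t1_def[abs_def] f_def meas_mu by measurable
  have ma: "a \<in> borel_measurable \<mu>" unfolding a_def[abs_def] meas_mu by measurable
  have mb: "b \<in> borel_measurable \<mu>" unfolding b_def[abs_def] meas_mu by measurable
  have m3: "t3 \<in> borel_measurable \<mu>" unfolding t3_def[abs_def] f_def meas_mu by measurable
  have m4: "t4 \<in> borel_measurable \<mu>" unfolding t4_def[abs_def] f_def meas_mu by measurable
  have m2: "(\<lambda>z. ennreal (1 / M) * (a z + b z)) \<in> borel_measurable \<mu>"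
    by (intro borel_measurable_times_ennreal borel_measurable_const borel_measurable_add ma mb)
  have e1: "ennreal (c\<^sup>2) \<le> integral\<^sup>N \<mu> f" unfolding f_def by (rule E_bound)
  have e2: "integral\<^sup>N \<mu> f \<le> (\<integral>\<^sup>+ z. (t1 z + ennreal (1 / M) * (a z + b z)) + (t3 z + t4 z) \<partial>\<mu>)"
    unfolding f_def t1_def a_def b_def t3_def t4_def
    by (rule nn_integral_mono) (rule pointwise_decomp[OF n M])
  have e3: "(\<integral>\<^sup>+ z. (t1 z + ennreal (1 / M) * (a z + b z)) + (t3 z + t4 z) \<partial>\<mu>)
      = (\<integral>\<^sup>+ z. t1 z + ennreal (1 / M) * (a z + b z) \<partial>\<mu>) + (\<integral>\<^sup>+ z. t3 z + t4 z \<partial>\<mu>)"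
    by (rule nn_integral_add; intro borel_measurable_add m1 m2 m3 m4)
  have e4: "(\<integral>\<^sup>+ z. t1 z + ennreal (1 / M) * (a z + b z) \<partial>\<mu>)
      = integral\<^sup>N \<mu> t1 + (\<integral>\<^sup>+ z. ennreal (1 / M) * (a z + b z) \<partial>\<mu>)"
    by (rule nn_integral_add[OF m1 m2])
  have e5: "(\<integral>\<^sup>+ z. ennreal (1 / M) * (a z + b z) \<partial>\<mu>) = ennreal (1 / M) * (\<integral>\<^sup>+ z. a z + b z \<partial>\<mu>)"
    by (rule nn_integral_cmult) (intro borel_measurable_add ma mb)
  have e6: "(\<integral>\<^sup>+ z. a z + b z \<partial>\<mu>) = integral\<^sup>N \<mu> a + integral\<^sup>N \<mu> b"
    by (rule nn_integral_add[OF ma mb])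
  have e7: "(\<integral>\<^sup>+ z. t3 z + t4 z \<partial>\<mu>) = integral\<^sup>N \<mu> t3 + integral\<^sup>N \<mu> t4"
    by (rule nn_integral_add[OF m3 m4])
  have e8: "integral\<^sup>N \<mu> a + integral\<^sup>N \<mu> b \<le> ennreal (4 * C) + ennreal (4 * C)"
    by (rule add_mono) (unfold a_def b_def, rule A_bound[OF n], rule B_bound)
  have e9: "integral\<^sup>N \<mu> t1 = (\<integral>\<^sup>+ z \<in> Dset \<gamma> v M n. ennreal (v n / (cmod (z - \<gamma> n))\<^sup>2) \<partial>\<mu>)"
    by (simp add: t1_def[abs_def] f_def)
  have e10: "integral\<^sup>N \<mu> t3 + integral\<^sup>N \<mu> t4 = fo n + fi n"
    by (simp add: t3_def[abs_def] t4_def[abs_def] f_def)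
  have "ennreal (c\<^sup>2) \<le> integral\<^sup>N \<mu> t1 + ennreal (1 / M) * (integral\<^sup>N \<mu> a + integral\<^sup>N \<mu> b)
      + (integral\<^sup>N \<mu> t3 + integral\<^sup>N \<mu> t4)"
    using e1 e2 unfolding e3 e4 e5 e6 e7 by (rule order_trans)
  also have "\<dots> \<le> integral\<^sup>N \<mu> t1 + ennreal (1 / M) * (ennreal (4 * C) + ennreal (4 * C))
      + (integral\<^sup>N \<mu> t3 + integral\<^sup>N \<mu> t4)"
    by (intro add_mono order_refl mult_left_mono e8) simp
  finally show ?thesis unfolding e9 e10 .
qed

end

context L begin

lemma final:
  assumes growth: "(\<lambda>n. v n) \<in> o(\<lambda>n. V n) \<or> (\<lambda>n. v n / (cmod (\<gamma> n))\<^sup>2) \<in> o(\<lambda>n. P n)"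
  shows "\<exists>M>0. \<exists>\<delta>>0. \<forall>\<^sub>F n in sequentially.
     (\<integral>\<^sup>+ z \<in> Dset \<gamma> v M n. ennreal (v n / (cmod (z - \<gamma> n))\<^sup>2) \<partial>\<mu>) \<ge> ennreal \<delta>"
proof -
  obtain K r where K0: "K \<ge> 0" and small: "\<forall>e>0. eventually (\<lambda>n. r n \<le> e) sequentially"
    and ev: "eventually (\<lambda>n. fo n + fi n \<le> ennreal (K * r n)) sequentially"
    using tail[OF growth] by blast
  define M where "M = 32 * C / c\<^sup>2 + 1"
  have c2: "c\<^sup>2 > 0" using c by simp
  have M0: "M > 0" using C c2 by (simp add: M_def add_nonneg_pos)
  have M8: "8 * C / M \<le> c\<^sup>2 / 4"
  proof -
    have "8 * C \<le> c\<^sup>2 / 4 * M" using c2 C by (simp add: M_def field_simps)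
    thus ?thesis using M0 by (simp add: divide_le_eq)
  qed
  define e where "e = c\<^sup>2 / (4 * (K + 1))"
  have e0: "e > 0" using c2 K0 by (simp add: e_def)
  have ev2: "eventually (\<lambda>n. r n \<le> e) sequentially" using small e0 by blast
  have ev1: "eventually (\<lambda>n. n \<ge> 1) sequentially" by (rule eventually_ge_at_top)
  have "\<forall>\<^sub>F n in sequentially.
     (\<integral>\<^sup>+ z \<in> Dset \<gamma> v M n. ennreal (v n / (cmod (z - \<gamma> n))\<^sup>2) \<partial>\<mu>) \<ge> ennreal (c\<^sup>2 / 2)"
    using ev ev2 ev1
  proof eventually_elim
    case (elim n)
    let ?D = "(\<integral>\<^sup>+ z \<in> Dset \<gamma> v M n. ennreal (v n / (cmod (z - \<gamma> n))\<^sup>2) \<partial>\<mu>)"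
    have d: "ennreal (c\<^sup>2) \<le> ?D + ennreal (1 / M) * (ennreal (4 * C) + ennreal (4 * C)) + (fo n + fi n)"
      by (rule decomp[OF elim(3) M0])
    have x1: "ennreal (1 / M) * (ennreal (4 * C) + ennreal (4 * C)) = ennreal (8 * C / M)"
    proof -
      have a0: "0 \<le> 4 * C" using C by simp
      have m0: "0 \<le> 1 / M" using M0 by simp
      have c8: "0 \<le> 8 * C" using C by simp
      have "ennreal (4 * C) + ennreal (4 * C) = ennreal (8 * C)"
        using ennreal_plus[OF a0 a0] by simp
      moreover have "ennreal (1 / M) * ennreal (8 * C) = ennreal (1 / M * (8 * C))"
        using ennreal_mult[OF m0 c8] by simp
      moreover have "1 / M * (8 * C) = 8 * C / M" by simp
      ultimately show ?thesis by metis
    qed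
    have Kr: "K * r n \<le> c\<^sup>2 / 4"
    proof -
      have "K * r n \<le> K * e" using elim(2) K0 by (rule mult_left_mono)
      also have "K * e = c\<^sup>2 / 4 * (K / (K + 1))" using K0 by (simp add: e_def field_simps)
      also have "\<dots> \<le> c\<^sup>2 / 4 * 1" using K0 c2 by (intro mult_left_mono) auto
      finally show ?thesis by simp
    qed
    have s: "ennreal (8 * C / M) + (fo n + fi n) \<le> ennreal (c\<^sup>2 / 4) + ennreal (c\<^sup>2 / 4)"
      using M8 elim(1) Kr by (intro add_mono ennreal_leI) (auto intro: order_trans ennreal_leI)
    have s2: "ennreal (c\<^sup>2 / 4) + ennreal (c\<^sup>2 / 4) = ennreal (c\<^sup>2 / 2)"
      using c2 by (simp add: ennreal_plus[symmetric])
    have "ennreal (c\<^sup>2) \<le> ?D + (ennreal (8 * C / M) + (fo n + fi n))"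
      using d unfolding x1 by (simp add: add.assoc)
    also have "\<dots> \<le> ?D + ennreal (c\<^sup>2 / 2)" using s s2 by (intro add_mono order_refl) simp
    finally have "ennreal (c\<^sup>2) \<le> ?D + ennreal (c\<^sup>2 / 2)" .
    thus ?case by (rule ennreal_half_helper) (use c2 in auto)
  qed
  moreover have "c\<^sup>2 / 2 > 0" using c2 by simp
  ultimately show ?thesis using M0 by blast
qed

end


lemma frac_id:
  fixes x G :: real
  assumes "G > 0"
  shows "x / G = (1 + G) / G * (x / (1 + G))"
proof -
  have ne: "1 + G \<noteq> 0" using assms by simp
  have "(1 + G) / G * (x / (1 + G)) = ((1 + G) * x) / (G * (1 + G))" by (rule times_divide_times_eq)
  also have "\<dots> = ((1 + G) * x) / ((1 + G) * G)" by (simp only: mult.commute)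
  also have "\<dots> = x / G" by (rule nonzero_mult_divide_mult_cancel_left[OF ne])
  finally show ?thesis by simp
qed

theorem lemma7:
  fixes \<gamma> :: "nat \<Rightarrow> complex" and v :: "nat \<Rightarrow> real" and \<mu> :: "complex measure"
  assumes inj: "inj \<gamma>"
    and nz: "\<forall>n. \<gamma> n \<noteq> 0"
    and ratio: "\<exists>q>1. \<forall>n. cmod (\<gamma> (Suc n)) / cmod (\<gamma> n) \<ge> q"
    and vpos: "\<forall>n. v n > 0"
    and vsum: "summable (\<lambda>n. v n / (1 + (cmod (\<gamma> n))\<^sup>2))"
    and growth: "(\<lambda>n. v n) \<in> o(\<lambda>n. Vs v n) \<or>
                 (\<lambda>n. v n / (cmod (\<gamma> n))\<^sup>2) \<in> o(\<lambda>n. Ps \<gamma> v n)"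
    and borel: "sets \<mu> = sets borel"
    and null: "emeasure \<mu> (range \<gamma>) = 0"
    and bdd: "\<exists>C. \<forall>a \<in> l2v v.
       (\<integral>\<^sup>+ z. ennreal ((cmod (Hop \<gamma> v a z))\<^sup>2) \<partial>\<mu>) \<le> ennreal (C * normv2 v a)"
    and bdd_below: "\<exists>c>0. \<forall>a \<in> l2v v.
       (\<integral>\<^sup>+ z. ennreal ((cmod (Hop \<gamma> v a z))\<^sup>2) \<partial>\<mu>) \<ge> ennreal (c\<^sup>2 * normv2 v a)"
  shows "\<exists>M>0. \<exists>\<delta>>0. \<forall>\<^sub>F n in sequentially.
     (\<integral>\<^sup>+ z \<in> Dset \<gamma> v M n. ennreal (v n / (cmod (z - \<gamma> n))\<^sup>2) \<partial>\<mu>) \<ge> ennreal \<delta>"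
proof -
  obtain q where q: "q > 1" and rq: "\<forall>n. cmod (\<gamma> (Suc n)) / cmod (\<gamma> n) \<ge> q"
    using ratio by blast
  have gq: "cmod (\<gamma> (Suc n)) \<ge> q * cmod (\<gamma> n)" for n
  proof -
    have p: "cmod (\<gamma> n) > 0" using nz by simp
    have "q \<le> cmod (\<gamma> (Suc n)) / cmod (\<gamma> n)" using rq by blast
    thus ?thesis using p by (simp add: le_divide_eq)
  qed
  have g0: "cmod (\<gamma> 0) \<le> cmod (\<gamma> n)" for n
  proof (induction n)
    case (Suc n)
    have "cmod (\<gamma> n) \<le> q * cmod (\<gamma> n)" using q by (simp add: mult_le_cancel_right1)
    thus ?case using Suc gq[of n] by linarith
  qed simp
  have vsum': "summable (\<lambda>n. v n / (cmod (\<gamma> n))\<^sup>2)"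
  proof -
    define k where "k = 1 + 1 / (cmod (\<gamma> 0))\<^sup>2"
    have le: "norm (v n / (cmod (\<gamma> n))\<^sup>2) \<le> k * (v n / (1 + (cmod (\<gamma> n))\<^sup>2))" for n
    proof -
      have gp: "cmod (\<gamma> n) > 0" "cmod (\<gamma> 0) > 0" using nz by auto
      have "(cmod (\<gamma> 0))\<^sup>2 \<le> (cmod (\<gamma> n))\<^sup>2" using g0[of n] gp by (intro power_mono) auto
      hence "1 / (cmod (\<gamma> n))\<^sup>2 \<le> 1 / (cmod (\<gamma> 0))\<^sup>2" using gp by (intro divide_left_mono) auto
      hence h: "(1 + (cmod (\<gamma> n))\<^sup>2) / (cmod (\<gamma> n))\<^sup>2 \<le> k"
        using gp by (simp add: k_def add_divide_distrib)
      have "v n / (cmod (\<gamma> n))\<^sup>2 = (1 + (cmod (\<gamma> n))\<^sup>2) / (cmod (\<gamma> n))\<^sup>2 * (v n / (1 + (cmod (\<gamma> n))\<^sup>2))"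
        by (rule frac_id) (use gp in simp)
      also have "\<dots> \<le> k * (v n / (1 + (cmod (\<gamma> n))\<^sup>2))"
        using h vpos by (intro mult_right_mono) (auto simp: less_imp_le)
      finally show ?thesis using vpos by (simp add: less_imp_le)
    qed
    show ?thesis
      by (rule summable_comparison_test'[OF summable_mult[OF vsum, of k]]) (use le in auto)
  qed
  obtain C0 where C0: "\<forall>a \<in> l2v v.
       (\<integral>\<^sup>+ z. ennreal ((cmod (Hop \<gamma> v a z))\<^sup>2) \<partial>\<mu>) \<le> ennreal (C0 * normv2 v a)"
    using bdd by blast
  define C where "C = max C0 0"
  have bddC: "(\<integral>\<^sup>+ z. ennreal ((cmod (Hop \<gamma> v a z))\<^sup>2) \<partial>\<mu>) \<le> ennreal (C * normv2 v a)"
    if a: "a \<in> l2v v" for a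
  proof -
    have "normv2 v a \<ge> 0"
      using a vpos unfolding l2v_def normv2_def by (auto intro!: suminf_nonneg simp: less_imp_le)
    hence "C0 * normv2 v a \<le> C * normv2 v a" by (simp add: C_def mult_right_mono)
    thus ?thesis using C0 a by (meson ennreal_leI order_trans)
  qed
  obtain c where c: "c > 0" and cb: "\<forall>a \<in> l2v v.
       (\<integral>\<^sup>+ z. ennreal ((cmod (Hop \<gamma> v a z))\<^sup>2) \<partial>\<mu>) \<ge> ennreal (c\<^sup>2 * normv2 v a)"
    using bdd_below by blast
  interpret L \<gamma> v \<mu> q C c
  proof
    show "q > 1" by (rule q)
    show "\<And>n. cmod (\<gamma> (Suc n)) \<ge> q * cmod (\<gamma> n)" by (rule gq)
    show "\<And>n. \<gamma> n \<noteq> 0" using nz by blast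
    show "\<And>n. v n > 0" using vpos by blast
    show "summable (\<lambda>n. v n / (cmod (\<gamma> n))\<^sup>2)" by (rule vsum')
    show "sets \<mu> = sets borel" by (rule borel)
    show "C \<ge> 0" by (simp add: C_def)
    show "\<And>a. a \<in> l2v v \<Longrightarrow>
       (\<integral>\<^sup>+ z. ennreal ((cmod (Hop \<gamma> v a z))\<^sup>2) \<partial>\<mu>) \<le> ennreal (C * normv2 v a)" by (rule bddC)
    show "c > 0" by (rule c)
    show "\<And>a. a \<in> l2v v \<Longrightarrow>
       (\<integral>\<^sup>+ z. ennreal ((cmod (Hop \<gamma> v a z))\<^sup>2) \<partial>\<mu>) \<ge> ennreal (c\<^sup>2 * normv2 v a)" using cb by blast
  qed
  show ?thesis by (rule final[OF growth])
qed


end
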